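(* Let $\Sigma$ be a set of events and $E \subseteq \Sigma$. For all sets $S_1, S_2$ of trace sets over $\Sigma$, $$\Big(\bigcup S_1\Big) \parallel_E \Big(\bigcup S_2\Big) \;=\; \bigcup_{T_1 \in S_1,\ T_2 \in S_2} T_1 \parallel_E T_2 .$$
   Context: A trace is a finite (possibly empty) sequence of events from $\Sigma$; $\Sigma^*$ is the set of traces, $\varepsilon$ the empty trace, and $st$ the concatenation of $s$ and $t$. A trace set is a prefix-closed subset of $\Sigma^*$ (the empty set is allowed). For a trace set $T$ and $e \in \Sigma$ define $eT := \{\varepsilon\} \cup \{et \mid t \in T\}$ and $T(e) := \{t \mid et \in T\}$. For $E \subseteq \Sigma$, the binary operation $\parallel_E$ on trace sets is the unique function satisfying: $\varnothing \parallel_E T = T \parallel_E \varnothing = \varnothing$ for every trace set $T$, and, for nonempty trace sets $T_1, T_2$, $$T_1 \parallel_E T_2 = \bigcup_{e \in E} e\big(T_1(e) \parallel_E T_2(e)\big) \cup \bigcup_{e \in \Sigma \setminus E}\Big( e\big(T_1(e) \parallel_E T_2\big) \cup e\big(T_1 \parallel_E T_2(e)\big)\Big).$$ *)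

theory Defs
  imports Main
begin

text \<open>Events are elements of the type 'a (playing the role of Sigma); traces are lists.\<close>

definition trace_set :: "'a list set \<Rightarrow> bool" where
  "trace_set T \<longleftrightarrow> (\<forall>s t. s @ t \<in> T \<longrightarrow> s \<in> T)"

definition ev_prefix :: "'a \<Rightarrow> 'a list set \<Rightarrow> 'a list set" where
  "ev_prefix e T = insert [] ((\<lambda>t. e # t) ` T)"

definition after :: "'a list set \<Rightarrow> 'a \<Rightarrow> 'a list set" where
  "after T e = {t. e # t \<in> T}"

definition par_eqs :: "'a set \<Rightarrow> ('a list set \<Rightarrow> 'a list set \<Rightarrow> 'a list set) \<Rightarrow> bool" where
  "par_eqs E f \<longleftrightarrow>
     (\<forall>T. f {} T = {} \<and> f T {} = {}) \<and>
     (\<forall>T1 T2. T1 \<noteq> {} \<longrightarrow> T2 \<noteq> {} \<longrightarrow>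
        f T1 T2 = (\<Union>e\<in>E. ev_prefix e (f (after T1 e) (after T2 e)))
                  \<union> (\<Union>e\<in>-E. ev_prefix e (f (after T1 e) T2) \<union> ev_prefix e (f T1 (after T2 e))))"

definition par :: "'a set \<Rightarrow> 'a list set \<Rightarrow> 'a list set \<Rightarrow> 'a list set" where
  "par E = (THE f. par_eqs E f)"

end

theory Submission
  imports Defs
begin

fun pmem :: "'a set \<Rightarrow> 'a list set \<Rightarrow> 'a list set \<Rightarrow> 'a list \<Rightarrow> bool" where
  "pmem E T1 T2 [] = (T1 \<noteq> {} \<and> T2 \<noteq> {})"
| "pmem E T1 T2 (e # t) = (T1 \<noteq> {} \<and> T2 \<noteq> {} \<and>
     (if e \<in> E then pmem E (after T1 e) (after T2 e) t
      else pmem E (after T1 e) T2 t \<or> pmem E T1 (after T2 e) t))"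

lemma eqs_nil:
  assumes "par_eqs E f" "T1 \<noteq> {}" "T2 \<noteq> {}"
  shows "[] \<in> f T1 T2"
proof -
  have "f T1 T2 = (\<Union>e\<in>E. ev_prefix e (f (after T1 e) (after T2 e)))
                  \<union> (\<Union>e\<in>-E. ev_prefix e (f (after T1 e) T2) \<union> ev_prefix e (f T1 (after T2 e)))"
    using assms unfolding par_eqs_def by blast
  moreover obtain e :: 'a where True by blast
  ultimately show ?thesis by (cases "e \<in> E") (auto simp: ev_prefix_def)
qed

lemma eqs_cons:
  assumes "par_eqs E f" "T1 \<noteq> {}" "T2 \<noteq> {}"
  shows "(e # t \<in> f T1 T2) = (if e \<in> E then t \<in> f (after T1 e) (after T2 e)
      else t \<in> f (after T1 e) T2 \<or> t \<in> f T1 (after T2 e))"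
proof -
  have "f T1 T2 = (\<Union>e\<in>E. ev_prefix e (f (after T1 e) (after T2 e)))
                  \<union> (\<Union>e\<in>-E. ev_prefix e (f (after T1 e) T2) \<union> ev_prefix e (f T1 (after T2 e)))"
    using assms unfolding par_eqs_def by blast
  then show ?thesis by (auto simp: ev_prefix_def)
qed

lemma eqs_pmem:
  assumes "par_eqs E f"
  shows "(t \<in> f T1 T2) = pmem E T1 T2 t"
  using assms
proof (induction t arbitrary: T1 T2)
  case Nil
  show ?case
  proof (cases "T1 = {} \<or> T2 = {}")
    case True
    then show ?thesis using Nil unfolding par_eqs_def by auto
  next
    case False
    then show ?thesis using eqs_nil[OF Nil, of T1 T2] by auto
  qed
next
  case (Cons e t)
  show ?case
  proof (cases "T1 = {} \<or> T2 = {}")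
    case True
    then show ?thesis using Cons.prems unfolding par_eqs_def by auto
  next
    case False
    then show ?thesis using eqs_cons[OF Cons.prems, of T1 T2 e t] Cons.IH[OF Cons.prems] by auto
  qed
qed

lemma g_eqs: "par_eqs E (\<lambda>T1 T2. {t. pmem E T1 T2 t})"
  unfolding par_eqs_def
proof (intro conjI allI impI)
  fix T show "{t. pmem E {} T t} = {}" by (auto elim: pmem.elims)
  show "{t. pmem E T {} t} = {}" by (auto elim: pmem.elims)
next
  fix T1 T2 :: "'a list set" assume "T1 \<noteq> {}" "T2 \<noteq> {}"
  show "{t. pmem E T1 T2 t} =
    (\<Union>e\<in>E. ev_prefix e {t. pmem E (after T1 e) (after T2 e) t}) \<union>
    (\<Union>e\<in>- E. ev_prefix e {t. pmem E (after T1 e) T2 t} \<union> ev_prefix e {t. pmem E T1 (after T2 e) t})"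
  proof (rule set_eqI)
    fix x show "x \<in> {t. pmem E T1 T2 t} \<longleftrightarrow> x \<in> (\<Union>e\<in>E. ev_prefix e {t. pmem E (after T1 e) (after T2 e) t}) \<union>
    (\<Union>e\<in>- E. ev_prefix e {t. pmem E (after T1 e) T2 t} \<union> ev_prefix e {t. pmem E T1 (after T2 e) t})"
    proof (cases x)
      case Nil
      obtain e :: 'a where True by blast
      then show ?thesis using Nil \<open>T1 \<noteq> {}\<close> \<open>T2 \<noteq> {}\<close>
        by (cases "e \<in> E") (auto simp: ev_prefix_def)
    next
      case (Cons e t)
      then show ?thesis using \<open>T1 \<noteq> {}\<close> \<open>T2 \<noteq> {}\<close> by (auto simp: ev_prefix_def)
    qed
  qed
qed

lemma par_mem: "(t \<in> par E T1 T2) = pmem E T1 T2 t"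
proof -
  have "par E = (\<lambda>T1 T2. {t. pmem E T1 T2 t})"
    unfolding par_def
  proof (rule the_equality)
    show "par_eqs E (\<lambda>T1 T2. {t. pmem E T1 T2 t})" by (rule g_eqs)
  next
    fix f assume "par_eqs E f"
    then show "f = (\<lambda>T1 T2. {t. pmem E T1 T2 t})" using eqs_pmem by blast
  qed
  then show ?thesis by simp
qed

lemma pmem_ne: "pmem E T1 T2 t \<Longrightarrow> T1 \<noteq> {} \<and> T2 \<noteq> {}"
  by (cases t) auto

lemma after_Union: "after (\<Union>S) e = \<Union>((\<lambda>T. after T e) ` S)"
  unfolding after_def by auto

lemma after_ne: "after T e \<noteq> {} \<Longrightarrow> T \<noteq> {}"
  unfolding after_def by auto

lemma pmem_Union:
  "pmem E (\<Union>S1) (\<Union>S2) t = (\<exists>T1\<in>S1. \<exists>T2\<in>S2. pmem E T1 T2 t)"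
proof (induction t arbitrary: S1 S2)
  case Nil
  then show ?case by auto
next
  case (Cons e t)
  have IH1: "pmem E (\<Union>((\<lambda>T. after T e) ` S1)) (\<Union>((\<lambda>T. after T e) ` S2)) t =
     (\<exists>T1\<in>S1. \<exists>T2\<in>S2. pmem E (after T1 e) (after T2 e) t)"
    using Cons.IH[of "(\<lambda>T. after T e) ` S1" "(\<lambda>T. after T e) ` S2"] by simp
  have IH2: "pmem E (\<Union>((\<lambda>T. after T e) ` S1)) (\<Union>S2) t =
     (\<exists>T1\<in>S1. \<exists>T2\<in>S2. pmem E (after T1 e) T2 t)"
    using Cons.IH[of "(\<lambda>T. after T e) ` S1" "S2"] by simp
  have IH3: "pmem E (\<Union>S1) (\<Union>((\<lambda>T. after T e) ` S2)) t =
     (\<exists>T1\<in>S1. \<exists>T2\<in>S2. pmem E T1 (after T2 e) t)"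
    using Cons.IH[of "S1" "(\<lambda>T. after T e) ` S2"] by simp
  show ?case
  proof (cases "e \<in> E")
    case True
    show ?thesis
    proof
      assume "pmem E (\<Union>S1) (\<Union>S2) (e # t)"
      then have "pmem E (\<Union>((\<lambda>T. after T e) ` S1)) (\<Union>((\<lambda>T. after T e) ` S2)) t"
        using True by (simp add: after_Union)
      then obtain T1 T2 where "T1 \<in> S1" "T2 \<in> S2" "pmem E (after T1 e) (after T2 e) t"
        using IH1 by blast
      moreover then have "T1 \<noteq> {}" "T2 \<noteq> {}" using pmem_ne after_ne by metis+
      ultimately show "\<exists>T1\<in>S1. \<exists>T2\<in>S2. pmem E T1 T2 (e # t)" using True by auto
    next
      assume "\<exists>T1\<in>S1. \<exists>T2\<in>S2. pmem E T1 T2 (e # t)"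
      then obtain T1 T2 where "T1 \<in> S1" "T2 \<in> S2" "pmem E T1 T2 (e # t)" by blast
      then have "T1 \<in> S1" "T2 \<in> S2" "T1 \<noteq> {}" "T2 \<noteq> {}" "pmem E (after T1 e) (after T2 e) t"
        using True by auto
      then have "\<Union>S1 \<noteq> {}" "\<Union>S2 \<noteq> {}"
        "pmem E (\<Union>((\<lambda>T. after T e) ` S1)) (\<Union>((\<lambda>T. after T e) ` S2)) t"
        using IH1 by blast+
      then show "pmem E (\<Union>S1) (\<Union>S2) (e # t)" using True by (simp add: after_Union)
    qed
  next
    case False
    show ?thesis
    proof
      assume "pmem E (\<Union>S1) (\<Union>S2) (e # t)"
      then have "pmem E (\<Union>((\<lambda>T. after T e) ` S1)) (\<Union>S2) t \<or>
                 pmem E (\<Union>S1) (\<Union>((\<lambda>T. after T e) ` S2)) t"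
        using False by (simp add: after_Union)
      then show "\<exists>T1\<in>S1. \<exists>T2\<in>S2. pmem E T1 T2 (e # t)"
      proof
        assume "pmem E (\<Union>((\<lambda>T. after T e) ` S1)) (\<Union>S2) t"
        then obtain T1 T2 where "T1 \<in> S1" "T2 \<in> S2" "pmem E (after T1 e) T2 t"
          using IH2 by blast
        moreover then have "T1 \<noteq> {}" "T2 \<noteq> {}" using pmem_ne after_ne by metis+
        ultimately show ?thesis using False by auto
      next
        assume "pmem E (\<Union>S1) (\<Union>((\<lambda>T. after T e) ` S2)) t"
        then obtain T1 T2 where "T1 \<in> S1" "T2 \<in> S2" "pmem E T1 (after T2 e) t"
          using IH3 by blast
        moreover then have "T1 \<noteq> {}" "T2 \<noteq> {}" using pmem_ne after_ne by metis+
        ultimately show ?thesis using False by auto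
      qed
    next
      assume "\<exists>T1\<in>S1. \<exists>T2\<in>S2. pmem E T1 T2 (e # t)"
      then obtain T1 T2 where "T1 \<in> S1" "T2 \<in> S2" "pmem E T1 T2 (e # t)" by blast
      then have "T1 \<in> S1" "T2 \<in> S2" "T1 \<noteq> {}" "T2 \<noteq> {}"
        "pmem E (after T1 e) T2 t \<or> pmem E T1 (after T2 e) t"
        using False by auto
      then have "\<Union>S1 \<noteq> {}" "\<Union>S2 \<noteq> {}"
        "pmem E (\<Union>((\<lambda>T. after T e) ` S1)) (\<Union>S2) t \<or>
         pmem E (\<Union>S1) (\<Union>((\<lambda>T. after T e) ` S2)) t"
        using IH2 IH3 by blast+
      then show "pmem E (\<Union>S1) (\<Union>S2) (e # t)" using False by (simp add: after_Union)
    qed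
  qed
qed

theorem lemma1:
  fixes E :: "'a set" and S1 S2 :: "'a list set set"
  assumes "\<forall>T\<in>S1. trace_set T" and "\<forall>T\<in>S2. trace_set T"
  shows "par E (\<Union>S1) (\<Union>S2) = (\<Union>T1\<in>S1. \<Union>T2\<in>S2. par E T1 T2)"
proof (rule set_eqI)
  fix x
  have "x \<in> par E (\<Union>S1) (\<Union>S2) \<longleftrightarrow> (\<exists>T1\<in>S1. \<exists>T2\<in>S2. pmem E T1 T2 x)"
    by (simp only: par_mem pmem_Union)
  also have "\<dots> \<longleftrightarrow> x \<in> (\<Union>T1\<in>S1. \<Union>T2\<in>S2. par E T1 T2)"
    by (simp add: par_mem)
  finally show "x \<in> par E (\<Union>S1) (\<Union>S2) \<longleftrightarrow> x \<in> (\<Union>T1\<in>S1. \<Union>T2\<in>S2. par E T1 T2)" .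
qed

end
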